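(* Let $a_0,a_1,a_2$ be elements of a field $K$ and let $(F(n,k))_{n\ge 0,\,k\in\mathbb{Z}}$ be defined by $F(0,0)=1$, $F(n,k)=0$ whenever $k<0$ or $k>n$, and \[ F(n,k)=F(n-1,k-1)+(a_2n+a_1k+a_0)\,F(n-1,k)\qquad(n\ge1). \] Then for every $n\ge 0$, in the polynomial ring $K[x]$, \[ \prod_{i=0}^{n-1}(x+ia_2)=\sum_{k=0}^{n}F(n,k)\prod_{i=0}^{k-1}(x-a_0-a_2-ia_1). \]
   Context: Empty products equal $1$. *)

theory Defs
  imports "HOL-Computational_Algebra.Polynomial"
begin

fun Ftri :: "'a::field \<Rightarrow> 'a \<Rightarrow> 'a \<Rightarrow> nat \<Rightarrow> int \<Rightarrow> 'a" where
  "Ftri a0 a1 a2 0 k = (if k = 0 then 1 else 0)"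
| "Ftri a0 a1 a2 (Suc m) k =
     (if k < 0 \<or> k > int (Suc m) then 0
      else Ftri a0 a1 a2 m (k - 1)
           + (a2 * of_nat (Suc m) + a1 * of_int k + a0) * Ftri a0 a1 a2 m k)"

end

theory Submission
  imports Defs
begin

lemma Ftri_zero: "k < 0 \<or> k > int n \<Longrightarrow> Ftri a0 a1 a2 n k = 0"
  by (induction n) auto

lemma Ftri_Suc_nat: "k \<le> Suc n \<Longrightarrow> Ftri a0 a1 a2 (Suc n) (int k) =
   Ftri a0 a1 a2 n (int k - 1) + (a2 * of_nat (Suc n) + a1 * of_nat k + a0) * Ftri a0 a1 a2 n (int k)"
  by simp

theorem mainTheorem6:
  fixes a0 a1 a2 :: "'a::field" and n :: nat
  shows "(\<Prod>i<n. [:of_nat i * a2, 1:]) =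
         (\<Sum>k=0..n. smult (Ftri a0 a1 a2 n (int k))
             (\<Prod>i<k. [:- a0 - a2 - of_nat i * a1, 1:]))"
proof (induction n)
  case 0
  then show ?case by simp
next
  case (Suc n)
  define P where "P = (\<lambda>k. \<Prod>i<k. [:- a0 - a2 - of_nat i * a1, 1::'a:])"
  define F where "F = Ftri a0 a1 a2"
  define c where "c = (\<lambda>k::nat. a2 * of_nat (Suc n) + a1 * of_nat k + a0)"
  have key: "[:of_nat n * a2, 1:] * P k = P (Suc k) + smult (c k) (P k)" for k
    by (simp add: P_def c_def algebra_simps poly_eq_iff coeff_pCons split: nat.splits)
  have z1: "F n (-1) = 0" "F n (int (Suc n)) = 0" "F n (1 + int n) = 0" by (simp_all add: F_def Ftri_zero)
  have "(\<Prod>i<Suc n. [:of_nat i * a2, 1:]) = [:of_nat n * a2, 1:] * (\<Sum>k=0..n. smult (F n (int k)) (P k))"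
    using Suc by (simp add: P_def F_def mult.commute)
  also have "\<dots> = (\<Sum>k=0..n. smult (F n (int k)) (P (Suc k))) + (\<Sum>k=0..n. smult (c k * F n (int k)) (P k))"
    unfolding sum_distrib_left sum.distrib[symmetric]
  proof (rule sum.cong)
    fix k assume "k \<in> {0..n}"
    have "[:of_nat n * a2, 1:] * smult (F n (int k)) (P k) = smult (F n (int k)) ([:of_nat n * a2, 1:] * P k)"
      by (rule mult_smult_right)
    also have "\<dots> = smult (F n (int k)) (P (Suc k)) + smult (c k * F n (int k)) (P k)"
      unfolding key smult_add_right smult_smult by (simp add: mult.commute)
    finally show "[:of_nat n * a2, 1:] * smult (F n (int k)) (P k) = smult (F n (int k)) (P (Suc k)) + smult (c k * F n (int k)) (P k)" .
  qed simp
  also have "(\<Sum>k=0..n. smult (F n (int k)) (P (Suc k))) = (\<Sum>k=0..Suc n. smult (F n (int k - 1)) (P k))"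
    by (subst sum.atLeast0_atMost_Suc_shift) (simp add: z1)
  also have "(\<Sum>k=0..n. smult (c k * F n (int k)) (P k)) = (\<Sum>k=0..Suc n. smult (c k * F n (int k)) (P k))"
    by (simp add: z1)
  also have "(\<Sum>k=0..Suc n. smult (F n (int k - 1)) (P k)) + (\<Sum>k=0..Suc n. smult (c k * F n (int k)) (P k))
     = (\<Sum>k=0..Suc n. smult (F (Suc n) (int k)) (P k))"
    unfolding sum.distrib[symmetric]
    by (rule sum.cong) (simp_all add: F_def c_def smult_add_left Ftri_Suc_nat del: Ftri.simps(2) of_nat_Suc)
  finally show ?case by (simp add: F_def P_def)
qed
end
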